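(* Let $\mathcal{D}$ be a $\{K_3,K_4\}$-decomposition of $K_{18}$ with $\alpha=13$, let $W$ be the set of vertices $x$ with $\alpha_x\ge 2$, and for $i\in\{0,1,2,3\}$ let $t_i$ be the number of copies of $K_3$ in $\mathcal{D}$ having exactly $i$ vertices in $W$. Then $(t_0,t_1,t_2,t_3)\neq(0,1,9,3)$.
   Context: A $\{K_3,K_4\}$-decomposition of $K_v$ is a collection of subgraphs, each isomorphic to $K_3$ or $K_4$, such that every edge of $K_v$ lies in exactly one of them. $\alpha$ is the number of copies of $K_3$ in the decomposition, and for a vertex $x$, $\alpha_x$ is the number of copies of $K_3$ in the decomposition containing $x$. *)

theory Defs
  imports Main
begin

definition K34_decomp :: "'a set \<Rightarrow> 'a set set \<Rightarrow> bool" where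
  "K34_decomp V D \<longleftrightarrow>
     (\<forall>B\<in>D. B \<subseteq> V \<and> (card B = 3 \<or> card B = 4)) \<and>
     (\<forall>x\<in>V. \<forall>y\<in>V. x \<noteq> y \<longrightarrow> (\<exists>!B. B \<in> D \<and> x \<in> B \<and> y \<in> B))"

definition triangles :: "'a set set \<Rightarrow> 'a set set" where
  "triangles D = {B \<in> D. card B = 3}"

definition alpha :: "'a set set \<Rightarrow> nat" where
  "alpha D = card (triangles D)"

definition alpha_at :: "'a set set \<Rightarrow> 'a \<Rightarrow> nat" where
  "alpha_at D x = card {B \<in> triangles D. x \<in> B}"

end

theory Submission
  imports Defs
begin


lemma decomp_finite:
  assumes "K34_decomp V D" "finite V"
  shows "finite D"
proof -
  have "D \<subseteq> Pow V" using assms(1) unfolding K34_decomp_def by auto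
  then show ?thesis using assms(2) by (meson finite_Pow_iff finite_subset)
qed

lemma decomp_unique:
  assumes "K34_decomp V D" "B \<in> D" "B' \<in> D" "x \<in> B" "x \<in> B'" "y \<in> B" "y \<in> B'" "x \<noteq> y"
  shows "B = B'"
proof -
  have "B \<subseteq> V" "B' \<subseteq> V" using assms(1,2,3) unfolding K34_decomp_def by auto
  then have "x \<in> V" "y \<in> V" using assms by auto
  then have "\<exists>!B. B \<in> D \<and> x \<in> B \<and> y \<in> B" using assms(1,8) unfolding K34_decomp_def by auto
  then show ?thesis using assms by auto
qed

lemma decomp_deg:
  assumes "K34_decomp V D" "finite V" "x \<in> V" "S \<subseteq> V"
  shows "card (S - {x}) = (\<Sum>B\<in>{B\<in>D. x \<in> B}. card (B \<inter> S - {x}))"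
proof -
  have fD: "finite D" using decomp_finite assms by blast
  have eq: "S - {x} = (\<Union>B\<in>{B\<in>D. x \<in> B}. B \<inter> S - {x})"
  proof
    show "S - {x} \<subseteq> (\<Union>B\<in>{B\<in>D. x \<in> B}. B \<inter> S - {x})"
    proof
      fix y assume y: "y \<in> S - {x}"
      then have "y \<in> V" using assms by auto
      then obtain B where "B \<in> D" "x \<in> B" "y \<in> B"
        using assms(1,3) y unfolding K34_decomp_def by blast
      then show "y \<in> (\<Union>B\<in>{B\<in>D. x \<in> B}. B \<inter> S - {x})" using y by auto
    qed
  qed auto
  have "card (\<Union>B\<in>{B\<in>D. x \<in> B}. B \<inter> S - {x}) = (\<Sum>B\<in>{B\<in>D. x \<in> B}. card (B \<inter> S - {x}))"
  proof (rule card_UN_disjoint)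
    show "finite {B\<in>D. x \<in> B}" using fD by auto
    show "\<forall>B\<in>{B\<in>D. x \<in> B}. finite (B \<inter> S - {x})" using assms(2,4) finite_subset by blast
    show "\<forall>B\<in>{B\<in>D. x \<in> B}. \<forall>B'\<in>{B\<in>D. x \<in> B}. B \<noteq> B' \<longrightarrow> (B \<inter> S - {x}) \<inter> (B' \<inter> S - {x}) = {}"
      using decomp_unique[OF assms(1)] by blast
  qed
  then show ?thesis using eq by simp
qed

lemma swap_count:
  fixes f :: "'b set \<Rightarrow> nat"
  assumes "finite S" "finite F"
  shows "(\<Sum>x\<in>S. \<Sum>B\<in>{B\<in>F. x \<in> B}. f B) = (\<Sum>B\<in>F. card (B \<inter> S) * f B)"
proof -
  have "(\<Sum>x\<in>S. \<Sum>B\<in>{B\<in>F. x \<in> B}. f B) = (\<Sum>x\<in>S. \<Sum>B\<in>F. if x \<in> B then f B else 0)"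
    by (rule sum.cong[OF refl], rule sum.inter_filter[OF assms(2)])
  also have "\<dots> = (\<Sum>B\<in>F. \<Sum>x\<in>S. if x \<in> B then f B else 0)"
    by (rule sum.swap)
  also have "\<dots> = (\<Sum>B\<in>F. card (B \<inter> S) * f B)"
  proof (rule sum.cong[OF refl])
    fix B assume "B \<in> F"
    have "(\<Sum>x\<in>S. if x \<in> B then f B else 0) = (\<Sum>x\<in>{x\<in>S. x \<in> B}. f B)"
      by (rule sum.inter_filter[OF assms(1), symmetric])
    also have "\<dots> = card {x\<in>S. x \<in> B} * f B" by simp
    also have "{x\<in>S. x \<in> B} = B \<inter> S" by auto
    finally show "(\<Sum>x\<in>S. if x \<in> B then f B else 0) = card (B \<inter> S) * f B" .
  qed
  finally show ?thesis .
qed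

lemma group_sum:
  fixes g :: "'b \<Rightarrow> nat" and h :: "nat \<Rightarrow> nat"
  assumes "finite F" "\<forall>B\<in>F. g B \<in> I" "finite I"
  shows "(\<Sum>B\<in>F. h (g B)) = (\<Sum>i\<in>I. h i * card {B\<in>F. g B = i})"
proof -
  have "(\<Sum>B\<in>F. h (g B)) = (\<Sum>B\<in>F. \<Sum>i\<in>I. if g B = i then h i else 0)"
  proof (rule sum.cong[OF refl])
    fix B assume "B \<in> F"
    then show "h (g B) = (\<Sum>i\<in>I. if g B = i then h i else 0)"
      using assms(2,3) by (simp add: sum.delta)
  qed
  also have "\<dots> = (\<Sum>i\<in>I. \<Sum>B\<in>F. if g B = i then h i else 0)" by (rule sum.swap)
  also have "\<dots> = (\<Sum>i\<in>I. h i * card {B\<in>F. g B = i})"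
  proof (rule sum.cong[OF refl])
    fix i
    have "(\<Sum>B\<in>F. if g B = i then h i else 0) = (\<Sum>B\<in>{B\<in>F. g B = i}. h i)"
      by (rule sum.inter_filter[OF assms(1), symmetric])
    then show "(\<Sum>B\<in>F. if g B = i then h i else 0) = h i * card {B\<in>F. g B = i}" by simp
  qed
  finally show ?thesis .
qed

lemma split34:
  fixes f :: "'b set \<Rightarrow> nat"
  assumes "finite F" "\<forall>B\<in>F. card B = 3 \<or> card B = 4"
  shows "(\<Sum>B\<in>F. f B) = (\<Sum>B\<in>{B\<in>F. card B = 3}. f B) + (\<Sum>B\<in>{B\<in>F. card B = 4}. f B)"
proof -
  have "F = {B\<in>F. card B = 3} \<union> {B\<in>F. card B = 4}" using assms(2) by auto
  then have "(\<Sum>B\<in>F. f B) = (\<Sum>B\<in>{B\<in>F. card B = 3} \<union> {B\<in>F. card B = 4}. f B)" by simp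
  also have "\<dots> = (\<Sum>B\<in>{B\<in>F. card B = 3}. f B) + (\<Sum>B\<in>{B\<in>F. card B = 4}. f B)"
    by (rule sum.union_disjoint) (use assms(1) in auto)
  finally show ?thesis .
qed


theorem mainTheorem16:
  fixes V :: "'a set" and D :: "'a set set"
  assumes "finite V" and "card V = 18"
    and "K34_decomp V D"
    and "alpha D = 13"
  defines "W \<equiv> {x \<in> V. alpha_at D x \<ge> 2}"
  defines "t \<equiv> (\<lambda>i::nat. card {B \<in> triangles D. card (B \<inter> W) = i})"
  shows "(t 0, t 1, t 2, t 3) \<noteq> (0, 1, 9, 3)"
proof
  assume tv: "(t 0, t 1, t 2, t 3) = (0, 1, 9, 3)"
  have fV: "finite V" by fact
  have dec: "K34_decomp V D" by fact
  have fD: "finite D" using decomp_finite assms by blast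
  have blk: "\<And>B. B \<in> D \<Longrightarrow> B \<subseteq> V \<and> (card B = 3 \<or> card B = 4)"
    using dec unfolding K34_decomp_def by blast
  define Tr where "Tr = triangles D"
  define K4 where "K4 = {B\<in>D. card B = 4}"
  define a where "a = alpha_at D"
  define b where "b = (\<lambda>x. card {B\<in>K4. x \<in> B})"
  define c where "c = (\<lambda>B. card (B \<inter> W))"
  have Tr_eq: "Tr = {B\<in>D. card B = 3}" unfolding Tr_def triangles_def by simp
  have a_eq: "\<And>x. a x = card {B\<in>Tr. x \<in> B}" unfolding a_def alpha_at_def Tr_def by simp
  have fTr: "finite Tr" and fK4: "finite K4" using fD Tr_eq K4_def by auto
  have WV: "W \<subseteq> V" unfolding W_def by auto
  have fW: "finite W" using WV fV finite_subset by blast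
  have cardTr: "card Tr = 13" using assms(4) unfolding alpha_def Tr_def by simp
  have tT: "\<And>i. t i = card {B\<in>Tr. c B = i}" unfolding t_def Tr_def c_def by simp

  have Dx_split: "\<And>x (f::'a set \<Rightarrow> nat). (\<Sum>B\<in>{B\<in>D. x \<in> B}. f B) =
        (\<Sum>B\<in>{B\<in>Tr. x \<in> B}. f B) + (\<Sum>B\<in>{B\<in>K4. x \<in> B}. f B)"
  proof -
    fix x and f :: "'a set \<Rightarrow> nat"
    have "(\<Sum>B\<in>{B\<in>D. x \<in> B}. f B) = (\<Sum>B\<in>{B\<in>{B\<in>D. x \<in> B}. card B = 3}. f B) + (\<Sum>B\<in>{B\<in>{B\<in>D. x \<in> B}. card B = 4}. f B)"
      by (rule split34) (use fD blk in auto)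
    moreover have "{B\<in>{B\<in>D. x \<in> B}. card B = 3} = {B\<in>Tr. x \<in> B}" using Tr_eq by auto
    moreover have "{B\<in>{B\<in>D. x \<in> B}. card B = 4} = {B\<in>K4. x \<in> B}" using K4_def by auto
    ultimately show "(\<Sum>B\<in>{B\<in>D. x \<in> B}. f B) =
        (\<Sum>B\<in>{B\<in>Tr. x \<in> B}. f B) + (\<Sum>B\<in>{B\<in>K4. x \<in> B}. f B)" by (simp only:)
  qed
  have cardDx: "\<And>x. card {B\<in>D. x \<in> B} = a x + b x"
  proof -
    fix x
    show "card {B\<in>D. x \<in> B} = a x + b x"
      using Dx_split[where x=x and f="\<lambda>_. 1"] a_eq[of x] b_def by simp
  qed
  have deg: "\<And>x. x \<in> V \<Longrightarrow> 2 * a x + 3 * b x = 17"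
  proof -
    fix x assume xV: "x \<in> V"
    have "card (V - {x}) = (\<Sum>B\<in>{B\<in>D. x \<in> B}. card (B \<inter> V - {x}))"
      by (rule decomp_deg[OF dec fV xV]) simp
    also have "\<dots> = (\<Sum>B\<in>{B\<in>Tr. x \<in> B}. card (B \<inter> V - {x})) + (\<Sum>B\<in>{B\<in>K4. x \<in> B}. card (B \<inter> V - {x}))"
      by (rule Dx_split)
    also have "(\<Sum>B\<in>{B\<in>Tr. x \<in> B}. card (B \<inter> V - {x})) = (\<Sum>B\<in>{B\<in>Tr. x \<in> B}. 2)"
    proof (rule sum.cong[OF refl])
      fix B assume "B \<in> {B\<in>Tr. x \<in> B}"
      then have "B \<inter> V - {x} = B - {x}" "card B = 3" "x \<in> B" "finite B"
        using blk Tr_eq by (auto intro: card_ge_0_finite)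
      then show "card (B \<inter> V - {x}) = 2" by simp
    qed
    also have "(\<Sum>B\<in>{B\<in>K4. x \<in> B}. card (B \<inter> V - {x})) = (\<Sum>B\<in>{B\<in>K4. x \<in> B}. 3)"
    proof (rule sum.cong[OF refl])
      fix B assume "B \<in> {B\<in>K4. x \<in> B}"
      then have "B \<inter> V - {x} = B - {x}" "card B = 4" "x \<in> B" "finite B"
        using blk K4_def by (auto intro: card_ge_0_finite)
      then show "card (B \<inter> V - {x}) = 3" by simp
    qed
    finally show "2 * a x + 3 * b x = 17" using xV assms(2) a_eq b_def by (simp add: mult.commute)
  qed
  have amod: "\<And>x. x \<in> V \<Longrightarrow> a x mod 3 = 1"
  proof -
    fix x assume "x \<in> V"
    from deg[OF this] show "a x mod 3 = 1" by presburger
  qed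

  have t0: "t 0 = 0" and t1: "t 1 = 1" and t2: "t 2 = 9" and t3: "t 3 = 3" using tv by auto
  have cTr_le: "\<forall>B\<in>Tr. c B \<in> {0,1,2,3}"
  proof
    fix B assume "B \<in> Tr"
    then have "card B = 3" "finite B" using Tr_eq blk by (auto intro: card_ge_0_finite)
    then have "c B \<le> 3" unfolding c_def by (metis card_mono inf_le1)
    then show "c B \<in> {0,1,2,3}" by auto
  qed
  have sumTr_c: "(\<Sum>B\<in>Tr. c B) = 28"
  proof -
    have "(\<Sum>B\<in>Tr. id (c B)) = (\<Sum>i\<in>{0,1,2,3}. id i * card {B\<in>Tr. c B = i})"
      by (rule group_sum[OF fTr cTr_le]) simp
    then show ?thesis using t1 t2 t3 tT by simp
  qed
  have sumTr_cc: "(\<Sum>B\<in>Tr. c B * (c B - 1)) = 36"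
  proof -
    have "(\<Sum>B\<in>Tr. (\<lambda>i. i * (i - 1)) (c B)) = (\<Sum>i\<in>{0,1,2,3}. (\<lambda>i. i * (i - 1)) i * card {B\<in>Tr. c B = i})"
      by (rule group_sum[OF fTr cTr_le]) simp
    then show ?thesis using t1 t2 t3 tT by simp
  qed
  have swapW: "\<And>S F f. finite S \<Longrightarrow> finite F \<Longrightarrow> (\<Sum>x\<in>S. \<Sum>B\<in>{B\<in>F. x \<in> B}. f B) = (\<Sum>B\<in>F. card (B \<inter> S) * f B)"
    by (rule swap_count)
  have sumW_a: "(\<Sum>x\<in>W. a x) = 28"
    using swapW[OF fW fTr, of "\<lambda>_. 1"] sumTr_c a_eq c_def by simp
  have sumV_a: "(\<Sum>x\<in>V. a x) = 39"
  proof -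
    have "(\<Sum>x\<in>V. a x) = (\<Sum>B\<in>Tr. card (B \<inter> V) * 1)"
      using swapW[OF fV fTr, of "\<lambda>_. 1"] a_eq by simp
    also have "\<dots> = (\<Sum>B\<in>Tr. 3)"
      by (rule sum.cong[OF refl]) (use blk Tr_eq in \<open>auto simp: Int_absorb2\<close>)
    finally show ?thesis using cardTr by simp
  qed
  define U where "U = V - W"
  have fU: "finite U" using fV U_def by simp
  have aU: "\<And>x. x \<in> U \<Longrightarrow> a x = 1"
  proof -
    fix x assume "x \<in> U"
    then have "x \<in> V" "\<not> a x \<ge> 2" unfolding U_def W_def a_def by auto
    with amod[OF this(1)] show "a x = 1" by presburger
  qed
  have bU: "\<And>x. x \<in> U \<Longrightarrow> b x = 5"
  proof -
    fix x assume xU: "x \<in> U"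
    then have "x \<in> V" unfolding U_def by simp
    from deg[OF this] aU[OF xU] show "b x = 5" by simp
  qed
  have VWU: "V = W \<union> U" "W \<inter> U = {}" using WV U_def by auto
  have "(\<Sum>x\<in>V. a x) = (\<Sum>x\<in>W. a x) + (\<Sum>x\<in>U. a x)"
    using VWU fW fU by (simp add: sum.union_disjoint)
  then have "(\<Sum>x\<in>U. a x) = 11" using sumV_a sumW_a by simp
  then have cardU: "card U = 11" using aU by simp
  have "card V = card W + card U" using VWU fW fU by (simp add: card_Un_disjoint)
  then have cardW: "card W = 7" using cardU assms(2) by simp
  have "(\<Sum>x\<in>V. 2 * a x + 3 * b x) = (\<Sum>x\<in>V. 17)" using deg by simp
  then have "2 * (\<Sum>x\<in>V. a x) + 3 * (\<Sum>x\<in>V. b x) = 17 * 18"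
    using assms(2) by (simp add: sum.distrib sum_distrib_left)
  then have sumV_b: "(\<Sum>x\<in>V. b x) = 76" using sumV_a by simp
  have "(\<Sum>x\<in>V. b x) = (\<Sum>B\<in>K4. card (B \<inter> V) * 1)"
    using swapW[OF fV fK4, of "\<lambda>_. 1"] b_def by simp
  also have "\<dots> = (\<Sum>B\<in>K4. 4)"
    by (rule sum.cong[OF refl]) (use blk K4_def in \<open>auto simp: Int_absorb2\<close>)
  finally have cardK4: "card K4 = 19" using sumV_b by simp
  have "(\<Sum>x\<in>W. 2 * a x + 3 * b x) = (\<Sum>x\<in>W. 17)" using deg WV by (intro sum.cong) auto
  then have "2 * (\<Sum>x\<in>W. a x) + 3 * (\<Sum>x\<in>W. b x) = 17 * 7"
    using cardW by (simp add: sum.distrib sum_distrib_left)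
  then have sumW_b: "(\<Sum>x\<in>W. b x) = 21" using sumW_a by simp
  have sumK4_c: "(\<Sum>B\<in>K4. c B) = 21"
    using swapW[OF fW fK4, of "\<lambda>_. 1"] sumW_b b_def c_def by simp
  have "(\<Sum>x\<in>W. \<Sum>B\<in>{B\<in>D. x \<in> B}. c B - 1) = (\<Sum>x\<in>W. 6)"
  proof (rule sum.cong[OF refl])
    fix x assume xW: "x \<in> W"
    then have "card (W - {x}) = (\<Sum>B\<in>{B\<in>D. x \<in> B}. card (B \<inter> W - {x}))"
      using decomp_deg[OF dec fV _ WV] WV by blast
    also have "\<dots> = (\<Sum>B\<in>{B\<in>D. x \<in> B}. c B - 1)"
      using xW by (intro sum.cong) (auto simp: c_def)
    finally show "(\<Sum>B\<in>{B\<in>D. x \<in> B}. c B - 1) = 6" using xW cardW fW by simp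
  qed
  then have "(\<Sum>B\<in>D. card (B \<inter> W) * (c B - 1)) = 42"
    using swapW[OF fW fD, of "\<lambda>B. c B - 1"] cardW by simp
  then have "(\<Sum>B\<in>D. c B * (c B - 1)) = 42" unfolding c_def .
  moreover have "(\<Sum>B\<in>D. c B * (c B - 1)) = (\<Sum>B\<in>Tr. c B * (c B - 1)) + (\<Sum>B\<in>K4. c B * (c B - 1))"
    using split34[OF fD, of "\<lambda>B. c B * (c B - 1)"] blk Tr_eq K4_def by auto
  ultimately have sumK4_cc: "(\<Sum>B\<in>K4. c B * (c B - 1)) = 6" using sumTr_cc by simp
  have cK4: "\<forall>B\<in>K4. c B \<in> {0,1,2,3,4}"
  proof
    fix B assume "B \<in> K4"
    then have "card B = 4" "finite B" using K4_def blk by (auto intro: card_ge_0_finite)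
    then have "c B \<le> 4" unfolding c_def by (metis card_mono inf_le1)
    then show "c B \<in> {0,1,2,3,4}" by auto
  qed
  define n where "n = (\<lambda>i. card {B\<in>K4. c B = i})"
  have "(\<Sum>B\<in>K4. (\<lambda>_. 1::nat) (c B)) = (\<Sum>i\<in>{0,1,2,3,4}. (\<lambda>_. 1::nat) i * card {B\<in>K4. c B = i})"
    by (rule group_sum[OF fK4 cK4]) simp
  then have E0: "n 0 + n 1 + n 2 + n 3 + n 4 = 19" using cardK4 n_def by simp
  have "(\<Sum>B\<in>K4. id (c B)) = (\<Sum>i\<in>{0,1,2,3,4}. id i * card {B\<in>K4. c B = i})"
    by (rule group_sum[OF fK4 cK4]) simp
  then have E1: "n 1 + 2 * n 2 + 3 * n 3 + 4 * n 4 = 21" using sumK4_c n_def by simp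
  have "(\<Sum>B\<in>K4. (\<lambda>i. i * (i - 1)) (c B)) = (\<Sum>i\<in>{0,1,2,3,4}. (\<lambda>i. i * (i - 1)) i * card {B\<in>K4. c B = i})"
    by (rule group_sum[OF fK4 cK4]) simp
  then have E2: "2 * n 2 + 6 * n 3 + 12 * n 4 = 6" using sumK4_cc n_def by simp
  have ncases: "(n 3 = 1 \<and> n 0 = 0 \<and> n 2 = 0 \<and> n 4 = 0) \<or> (n 2 = 3 \<and> n 0 = 1 \<and> n 3 = 0 \<and> n 4 = 0)"
  proof -
    have n4: "n 4 = 0" using E2 by (cases "n 4") auto
    have n3: "n 3 = 0 \<or> n 3 = 1" using E2 by (cases "n 3") auto
    then show ?thesis using E0 E1 E2 n4 by auto
  qed
  have cTr_pos: "\<And>B. B \<in> Tr \<Longrightarrow> c B \<ge> 1"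
  proof (rule ccontr)
    fix B assume "B \<in> Tr" "\<not> c B \<ge> 1"
    then have "B \<in> {B\<in>Tr. c B = 0}" by simp
    then have "{B\<in>Tr. c B = 0} \<noteq> {}" by blast
    then have "t 0 \<noteq> 0" using tT fTr by simp
    then show False using t0 by simp
  qed
  have empty_n: "\<And>i B. n i = 0 \<Longrightarrow> B \<in> K4 \<Longrightarrow> c B \<noteq> i"
  proof -
    fix i B assume "n i = 0" "B \<in> K4"
    then show "c B \<noteq> i" using fK4 unfolding n_def by auto
  qed
  have sumU: "\<And>x. x \<in> U \<Longrightarrow> (\<Sum>B\<in>{B\<in>D. x \<in> B}. c B) = 7"
  proof -
    fix x assume xU: "x \<in> U"
    then have xV: "x \<in> V" and xW: "x \<notin> W" unfolding U_def by auto
    have "card (W - {x}) = (\<Sum>B\<in>{B\<in>D. x \<in> B}. card (B \<inter> W - {x}))"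
      by (rule decomp_deg[OF dec fV xV WV])
    moreover have "W - {x} = W" using xW by simp
    moreover have "\<And>B. B \<inter> W - {x} = B \<inter> W" using xW by auto
    ultimately show "(\<Sum>B\<in>{B\<in>D. x \<in> B}. c B) = 7" using cardW c_def by simp
  qed
  have fDx: "\<And>x. finite {B\<in>D. x \<in> B}" using fD by simp
  show False
  proof (cases "n 3 = 1 \<and> n 0 = 0 \<and> n 2 = 0 \<and> n 4 = 0")
    case True
    then have "card {B\<in>K4. c B = 3} = 1" unfolding n_def by simp
    then have "{B\<in>K4. c B = 3} \<noteq> {}" by (intro notI) simp
    then obtain K0 where K0: "K0 \<in> K4" "c K0 = 3" by blast
    have cK4pos: "\<And>B. B \<in> K4 \<Longrightarrow> c B \<ge> 1"
    proof -
      fix B assume "B \<in> K4"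
      then have "c B \<noteq> 0" using empty_n True by blast
      then show "c B \<ge> 1" by simp
    qed
    have "card K0 = 4" "finite K0" using K0 K4_def blk by (auto intro: card_ge_0_finite)
    then have "card (K0 \<inter> W) < card K0" using K0 c_def by simp
    then have "K0 \<inter> W \<noteq> K0" by auto
    then have "K0 - W \<noteq> {}" by blast
    then obtain v where v: "v \<in> K0" "v \<notin> W" by blast
    have K0D: "K0 \<in> D" using K0 K4_def by simp
    then have vV: "v \<in> V" using blk v by auto
    then have vU: "v \<in> U" using v U_def by simp
    have cDv: "card {B\<in>D. v \<in> B} = 6" using cardDx aU[OF vU] bU[OF vU] by simp
    have Dv: "{B\<in>D. v \<in> B} = insert K0 ({B\<in>D. v \<in> B} - {K0})" using K0D v by auto
    have "(\<Sum>B\<in>{B\<in>D. v \<in> B}. c B) = c K0 + (\<Sum>B\<in>{B\<in>D. v \<in> B} - {K0}. c B)"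
      using Dv fDx by (metis finite_Diff insert_Diff_single sum.insert_remove)
    also have "(\<Sum>B\<in>{B\<in>D. v \<in> B} - {K0}. c B) \<ge> (\<Sum>B\<in>{B\<in>D. v \<in> B} - {K0}. 1)"
    proof (rule sum_mono)
      fix B assume "B \<in> {B\<in>D. v \<in> B} - {K0}"
      then have "B \<in> Tr \<or> B \<in> K4" using blk Tr_eq K4_def by auto
      then show "1 \<le> c B" using cTr_pos cK4pos by blast
    qed
    then have "c K0 + (\<Sum>B\<in>{B\<in>D. v \<in> B} - {K0}. c B) \<ge> 3 + 5"
      using K0 cDv K0D v fDx by simp
    finally show False using sumU[OF vU] by simp
  next
    case False
    then have N: "n 2 = 3 \<and> n 0 = 1 \<and> n 3 = 0 \<and> n 4 = 0" using ncases by blast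
    then have "card {B\<in>K4. c B = 0} = 1" unfolding n_def by simp
    then have "{B\<in>K4. c B = 0} \<noteq> {}" by (intro notI) simp
    then obtain Q where Q: "Q \<in> K4" "c Q = 0" by blast
    have QD: "Q \<in> D" using Q K4_def by simp
    define A where "A = {B\<in>K4. c B = 2}"
    have cardA: "card A = 3" using N A_def n_def by simp
    have cardQ: "card Q = 4" using Q K4_def by simp
    have le1: "\<And>B. B \<in> K4 \<Longrightarrow> B \<notin> A \<Longrightarrow> c B \<le> 1"
    proof -
      fix B assume "B \<in> K4" "B \<notin> A"
      then have "c B \<in> {0,1,2,3,4}" "c B \<noteq> 2" "c B \<noteq> 3" "c B \<noteq> 4"
        using cK4 A_def empty_n N by auto
      then show "c B \<le> 1" by auto
    qed
    have hit: "\<forall>q\<in>Q. \<exists>K\<in>A. q \<in> K"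
    proof
      fix q assume qQ: "q \<in> Q"
      show "\<exists>K\<in>A. q \<in> K"
      proof (rule ccontr)
        assume nA: "\<not> (\<exists>K\<in>A. q \<in> K)"
        have qV: "q \<in> V" using qQ QD blk by auto
        have "Q \<inter> W = {}" using Q c_def fW by simp
        then have qW: "q \<notin> W" using qQ by blast
        have qU: "q \<in> U" using qV qW U_def by simp
        have s1: "(\<Sum>B\<in>{B\<in>Tr. q \<in> B}. c B) \<le> (\<Sum>B\<in>{B\<in>Tr. q \<in> B}. 2)"
        proof (rule sum_mono)
          fix B assume B: "B \<in> {B\<in>Tr. q \<in> B}"
          then have "card B = 3" "finite B" using Tr_eq blk by (auto intro: card_ge_0_finite)
          moreover have "B \<inter> W \<subseteq> B - {q}" using B qW by auto
          ultimately have "card (B \<inter> W) \<le> card (B - {q})" by (meson card_mono finite_Diff)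
          then show "c B \<le> 2" using B \<open>card B = 3\<close> c_def by simp
        qed
        have Kq: "{B\<in>K4. q \<in> B} = insert Q ({B\<in>K4. q \<in> B} - {Q})" using Q qQ by auto
        have fKq: "finite {B\<in>K4. q \<in> B}" using fK4 by simp
        have "(\<Sum>B\<in>{B\<in>K4. q \<in> B}. c B) = c Q + (\<Sum>B\<in>{B\<in>K4. q \<in> B} - {Q}. c B)"
          using Kq fKq by (metis finite_Diff insert_Diff_single sum.insert_remove)
        also have "(\<Sum>B\<in>{B\<in>K4. q \<in> B} - {Q}. c B) \<le> (\<Sum>B\<in>{B\<in>K4. q \<in> B} - {Q}. 1)"
        proof (rule sum_mono)
          fix B assume "B \<in> {B\<in>K4. q \<in> B} - {Q}"
          then show "c B \<le> 1" using le1 nA by auto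
        qed
        also have "(\<Sum>B\<in>{B\<in>K4. q \<in> B} - {Q}. 1::nat) = 4"
          using bU[OF qU] b_def Q qQ fKq by simp
        finally have s2: "(\<Sum>B\<in>{B\<in>K4. q \<in> B}. c B) \<le> 4" using Q by simp
        have "(\<Sum>B\<in>{B\<in>D. q \<in> B}. c B) = (\<Sum>B\<in>{B\<in>Tr. q \<in> B}. c B) + (\<Sum>B\<in>{B\<in>K4. q \<in> B}. c B)"
          by (rule Dx_split)
        also have "\<dots> \<le> 6" using s1 s2 aU[OF qU] a_eq by simp
        finally show False using sumU[OF qU] by simp
      qed
    qed
    then obtain f where f: "\<forall>q\<in>Q. f q \<in> A \<and> q \<in> f q" by metis
    have "inj_on f Q"
    proof
      fix q q' assume qs: "q \<in> Q" "q' \<in> Q" "f q = f q'"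
      show "q = q'"
      proof (rule ccontr)
        assume "q \<noteq> q'"
        have "f q \<in> D" "f q \<noteq> Q" using f qs Q A_def K4_def by auto
        moreover have "f q = Q"
          using decomp_unique[OF dec \<open>f q \<in> D\<close> QD, of q q'] f qs \<open>q \<noteq> q'\<close> by metis
        ultimately show False by simp
      qed
    qed
    moreover have "f ` Q \<subseteq> A" using f by auto
    moreover have "finite A" using fK4 A_def by simp
    ultimately have "card Q \<le> card A" by (rule card_inj_on_le)
    then show False using cardQ cardA by simp
  qed
qed
end
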